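(* Let $(G,\preceq)$ be a nontrivial left-ordered group whose Conradian soul is trivial. Then $\preceq$ is an accumulation point, in $\mathcal{LO}(G)$, of the set of its conjugates $\{\preceq_h: h\in G\}$.
   Context: A left-ordering is a total order invariant under left multiplication; it is Conradian if for all $f\succ id$, $g\succ id$ there is $n\in\mathbb{N}$ with $fg^n\succ g$. The Conradian soul of $(G,\preceq)$ is the maximal $\preceq$-convex subgroup (convex: $f_1\prec h\prec f_2$, $f_i$ in it, implies $h$ in it) on which $\preceq$ restricts to a Conradian ordering. The conjugate $\preceq_h$ is defined by $g\succ_h id$ iff $hgh^{-1}\succ id$. $\mathcal{LO}(G)$ is the space of left-orderings with the topology in which basic neighbourhoods of $\preceq$ are the sets of left-orderings agreeing with $\preceq$ on a given finite subset of $G$. *)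

theory Defs
  imports "HOL-Algebra.Group"
begin

definition left_ordering :: "('a, 'b) monoid_scheme \<Rightarrow> ('a \<Rightarrow> 'a \<Rightarrow> bool) \<Rightarrow> bool" where
  "left_ordering G lo \<longleftrightarrow>
     (\<forall>a b. lo a b \<longrightarrow> a \<in> carrier G \<and> b \<in> carrier G) \<and>
     (\<forall>a\<in>carrier G. lo a a) \<and>
     (\<forall>a\<in>carrier G. \<forall>b\<in>carrier G. lo a b \<and> lo b a \<longrightarrow> a = b) \<and>
     (\<forall>a\<in>carrier G. \<forall>b\<in>carrier G. \<forall>c\<in>carrier G. lo a b \<and> lo b c \<longrightarrow> lo a c) \<and>
     (\<forall>a\<in>carrier G. \<forall>b\<in>carrier G. lo a b \<or> lo b a) \<and>
     (\<forall>h\<in>carrier G. \<forall>a\<in>carrier G. \<forall>b\<in>carrier G. lo a b \<longrightarrow> lo (h \<otimes>\<^bsub>G\<^esub> a) (h \<otimes>\<^bsub>G\<^esub> b))"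

definition strict :: "('a \<Rightarrow> 'a \<Rightarrow> bool) \<Rightarrow> 'a \<Rightarrow> 'a \<Rightarrow> bool" where
  "strict lo a b \<longleftrightarrow> lo a b \<and> a \<noteq> b"

definition convex_subgroup :: "('a, 'b) monoid_scheme \<Rightarrow> ('a \<Rightarrow> 'a \<Rightarrow> bool) \<Rightarrow> 'a set \<Rightarrow> bool" where
  "convex_subgroup G lo H \<longleftrightarrow> subgroup H G \<and>
     (\<forall>f1\<in>H. \<forall>f2\<in>H. \<forall>h\<in>carrier G. strict lo f1 h \<and> strict lo h f2 \<longrightarrow> h \<in> H)"

definition conradian_on :: "('a, 'b) monoid_scheme \<Rightarrow> ('a \<Rightarrow> 'a \<Rightarrow> bool) \<Rightarrow> 'a set \<Rightarrow> bool" where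
  "conradian_on G lo H \<longleftrightarrow>
     (\<forall>f\<in>H. \<forall>g\<in>H. strict lo \<one>\<^bsub>G\<^esub> f \<and> strict lo \<one>\<^bsub>G\<^esub> g \<longrightarrow>
        (\<exists>n::nat. strict lo g (f \<otimes>\<^bsub>G\<^esub> (g [^]\<^bsub>G\<^esub> n))))"

definition is_conradian_soul :: "('a, 'b) monoid_scheme \<Rightarrow> ('a \<Rightarrow> 'a \<Rightarrow> bool) \<Rightarrow> 'a set \<Rightarrow> bool" where
  "is_conradian_soul G lo C \<longleftrightarrow>
     convex_subgroup G lo C \<and> conradian_on G lo C \<and>
     (\<forall>H. convex_subgroup G lo H \<and> conradian_on G lo H \<longrightarrow> H \<subseteq> C)"

text \<open>Conjugate ordering: g >_h id iff h g h^{-1} > id; extended by left invariance,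
  a <=_h b iff id <=_h a^{-1} b.\<close>
definition conj_ord :: "('a, 'b) monoid_scheme \<Rightarrow> ('a \<Rightarrow> 'a \<Rightarrow> bool) \<Rightarrow> 'a \<Rightarrow> 'a \<Rightarrow> 'a \<Rightarrow> bool" where
  "conj_ord G lo h a b \<longleftrightarrow> a \<in> carrier G \<and> b \<in> carrier G \<and>
     lo \<one>\<^bsub>G\<^esub> (h \<otimes>\<^bsub>G\<^esub> (inv\<^bsub>G\<^esub> a \<otimes>\<^bsub>G\<^esub> b) \<otimes>\<^bsub>G\<^esub> inv\<^bsub>G\<^esub> h)"

definition agree_on :: "'a set \<Rightarrow> ('a \<Rightarrow> 'a \<Rightarrow> bool) \<Rightarrow> ('a \<Rightarrow> 'a \<Rightarrow> bool) \<Rightarrow> bool" where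
  "agree_on F lo1 lo2 \<longleftrightarrow> (\<forall>a\<in>F. \<forall>b\<in>F. lo1 a b \<longleftrightarrow> lo2 a b)"

text \<open>lo is an accumulation point in LO(G) of the set S of left-orderings: every basic
  neighbourhood (orderings agreeing with lo on a finite subset of G) contains an element
  of S different from lo.\<close>
definition accumulation_point :: "('a, 'b) monoid_scheme \<Rightarrow> ('a \<Rightarrow> 'a \<Rightarrow> bool) \<Rightarrow> ('a \<Rightarrow> 'a \<Rightarrow> bool) set \<Rightarrow> bool" where
  "accumulation_point G lo S \<longleftrightarrow>
     (\<forall>F. finite F \<and> F \<subseteq> carrier G \<longrightarrow> (\<exists>lo'\<in>S. lo' \<noteq> lo \<and> agree_on F lo lo'))"

end

theory Submission
  imports Defs
begin

locale lord = group G for G (structure) + fixes lo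
  assumes lo: "left_ordering G lo"
begin

lemma L1: "(\<forall>a b. lo a b \<longrightarrow> a \<in> carrier G \<and> b \<in> carrier G)"
  using lo unfolding left_ordering_def by (elim conjE) assumption
lemma L2: "(\<forall>a\<in>carrier G. lo a a)"
  using lo unfolding left_ordering_def by (elim conjE) assumption
lemma L3: "(\<forall>a\<in>carrier G. \<forall>b\<in>carrier G. lo a b \<and> lo b a \<longrightarrow> a = b)"
  using lo unfolding left_ordering_def by (elim conjE) assumption
lemma L4: "(\<forall>a\<in>carrier G. \<forall>b\<in>carrier G. \<forall>c\<in>carrier G. lo a b \<and> lo b c \<longrightarrow> lo a c)"
  using lo unfolding left_ordering_def by (elim conjE) assumption
lemma L5: "(\<forall>a\<in>carrier G. \<forall>b\<in>carrier G. lo a b \<or> lo b a)"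
  using lo unfolding left_ordering_def by (elim conjE) assumption
lemma L6: "(\<forall>h\<in>carrier G. \<forall>a\<in>carrier G. \<forall>b\<in>carrier G. lo a b \<longrightarrow> lo (h \<otimes> a) (h \<otimes> b))"
  using lo unfolding left_ordering_def by (elim conjE) assumption

lemma dom: "lo a b \<Longrightarrow> a \<in> carrier G \<and> b \<in> carrier G"
  using L1 by blast
lemma rfl: "a \<in> carrier G \<Longrightarrow> lo a a"
  using L2 by blast
lemma asym: "lo a b \<Longrightarrow> lo b a \<Longrightarrow> a = b"
  using L3 dom by blast
lemma trns: "lo a b \<Longrightarrow> lo b c \<Longrightarrow> lo a c"
  using L4 dom by meson
lemma tot: "a \<in> carrier G \<Longrightarrow> b \<in> carrier G \<Longrightarrow> lo a b \<or> lo b a"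
  using L5 by blast
lemma linv: "lo a b \<Longrightarrow> h \<in> carrier G \<Longrightarrow> lo (h \<otimes> a) (h \<otimes> b)"
  using L6 dom by meson

lemma cancel1 [simp]: "h \<in> carrier G \<Longrightarrow> a \<in> carrier G \<Longrightarrow> inv h \<otimes> (h \<otimes> a) = a"
  by (simp add: m_assoc[symmetric])
lemma cancel2 [simp]: "h \<in> carrier G \<Longrightarrow> a \<in> carrier G \<Longrightarrow> h \<otimes> (inv h \<otimes> a) = a"
  by (simp add: m_assoc[symmetric])
lemma cancel3 [simp]: "h \<in> carrier G \<Longrightarrow> a \<in> carrier G \<Longrightarrow> a \<otimes> h \<otimes> inv h = a"
  by (simp add: m_assoc)
lemma cancel4 [simp]: "h \<in> carrier G \<Longrightarrow> a \<in> carrier G \<Longrightarrow> a \<otimes> inv h \<otimes> h = a"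
  by (simp add: m_assoc)

lemma linv_iff:
  assumes h: "h \<in> carrier G" "a \<in> carrier G" "b \<in> carrier G"
  shows "lo (h \<otimes> a) (h \<otimes> b) \<longleftrightarrow> lo a b"
proof
  assume p: "lo (h \<otimes> a) (h \<otimes> b)"
  have "lo (inv h \<otimes> (h \<otimes> a)) (inv h \<otimes> (h \<otimes> b))" by (rule linv[OF p]) (use h in simp)
  then show "lo a b" using h by simp
next
  assume "lo a b" then show "lo (h \<otimes> a) (h \<otimes> b)" using h by (simp add: linv)
qed

lemma lo_one: "a \<in> carrier G \<Longrightarrow> b \<in> carrier G \<Longrightarrow> lo a b \<longleftrightarrow> lo \<one> (inv a \<otimes> b)"
  using linv_iff[of "inv a" a b] by simp

definition NN where "NN = {x\<in>carrier G. \<forall>g\<in>carrier G. lo \<one> (inv x \<otimes> g \<otimes> x) \<longleftrightarrow> lo \<one> g}"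

lemma NN_D: "x \<in> NN \<Longrightarrow> g \<in> carrier G \<Longrightarrow> lo \<one> (inv x \<otimes> g \<otimes> x) \<longleftrightarrow> lo \<one> g"
  unfolding NN_def by blast
lemma NN_I: "x \<in> carrier G \<Longrightarrow> (\<And>g. g \<in> carrier G \<Longrightarrow> lo \<one> (inv x \<otimes> g \<otimes> x) \<longleftrightarrow> lo \<one> g) \<Longrightarrow> x \<in> NN"
  unfolding NN_def by blast
lemma NN_carrier: "x \<in> NN \<Longrightarrow> x \<in> carrier G" unfolding NN_def by auto

lemma NN_one: "\<one> \<in> NN" by (rule NN_I) auto

lemma NN_mult:
  assumes x: "x \<in> NN" and y: "y \<in> NN" shows "x \<otimes> y \<in> NN"
proof (rule NN_I)
  have xc: "x \<in> carrier G" and yc: "y \<in> carrier G" using x y NN_carrier by auto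
  then show "x \<otimes> y \<in> carrier G" by simp
  fix g assume g: "g \<in> carrier G"
  have e: "inv (x \<otimes> y) \<otimes> g \<otimes> (x \<otimes> y) = inv y \<otimes> (inv x \<otimes> g \<otimes> x) \<otimes> y"
    using xc yc g by (simp add: inv_mult_group m_assoc)
  have "lo \<one> (inv (x \<otimes> y) \<otimes> g \<otimes> (x \<otimes> y)) \<longleftrightarrow> lo \<one> (inv x \<otimes> g \<otimes> x)"
    unfolding e by (rule NN_D[OF y]) (use xc g in simp)
  also have "\<dots> \<longleftrightarrow> lo \<one> g" by (rule NN_D[OF x g])
  finally show "lo \<one> (inv (x \<otimes> y) \<otimes> g \<otimes> (x \<otimes> y)) \<longleftrightarrow> lo \<one> g" .
qed

lemma NN_inv:
  assumes x: "x \<in> NN" shows "inv x \<in> NN"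
proof (rule NN_I)
  have xc: "x \<in> carrier G" using x NN_carrier by auto
  then show "inv x \<in> carrier G" by simp
  fix g assume g: "g \<in> carrier G"
  have e: "inv x \<otimes> (inv (inv x) \<otimes> g \<otimes> inv x) \<otimes> x = g"
    using xc g by (simp add: m_assoc)
  have "lo \<one> (inv x \<otimes> (inv (inv x) \<otimes> g \<otimes> inv x) \<otimes> x) \<longleftrightarrow> lo \<one> (inv (inv x) \<otimes> g \<otimes> inv x)"
    by (rule NN_D[OF x]) (use xc g in simp)
  then show "lo \<one> (inv (inv x) \<otimes> g \<otimes> inv x) \<longleftrightarrow> lo \<one> g" unfolding e by simp
qed

lemma NN_right:
  assumes x: "x \<in> NN" and ab: "a \<in> carrier G" "b \<in> carrier G"
  shows "lo (a \<otimes> x) (b \<otimes> x) \<longleftrightarrow> lo a b"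
proof -
  have xc: "x \<in> carrier G" using x NN_carrier by auto
  have "lo (a \<otimes> x) (b \<otimes> x) \<longleftrightarrow> lo \<one> (inv (a \<otimes> x) \<otimes> (b \<otimes> x))"
    using lo_one[of "a \<otimes> x" "b \<otimes> x"] ab xc by simp
  also have "inv (a \<otimes> x) \<otimes> (b \<otimes> x) = inv x \<otimes> (inv a \<otimes> b) \<otimes> x"
    using ab xc by (simp add: inv_mult_group m_assoc)
  also have "lo \<one> (inv x \<otimes> (inv a \<otimes> b) \<otimes> x) \<longleftrightarrow> lo \<one> (inv a \<otimes> b)"
    by (rule NN_D[OF x]) (use ab in simp)
  also have "\<dots> \<longleftrightarrow> lo a b" using lo_one[of a b] ab by simp
  finally show ?thesis .
qed

lemma inv_anti:
  assumes a: "a \<in> NN" and ab: "lo a b" shows "lo (inv b) (inv a)"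
proof -
  have c: "a \<in> carrier G" "b \<in> carrier G" using ab dom by auto
  have "lo (inv b \<otimes> a) (inv b \<otimes> b)" using linv[OF ab, of "inv b"] c by simp
  then have "lo (inv b \<otimes> a) \<one>" using c by simp
  then have "lo (inv b \<otimes> a \<otimes> inv a) (\<one> \<otimes> inv a)"
    using NN_right[OF NN_inv[OF a], of "inv b \<otimes> a" "\<one>"] c by simp
  then show ?thesis using c by simp
qed

lemma key:
  assumes soul: "\<And>H. convex_subgroup G lo H \<Longrightarrow> conradian_on G lo H \<Longrightarrow> H \<subseteq> {\<one>}"
    and m: "m \<in> carrier G" "lo \<one> m" "m \<noteq> \<one>"
  shows "\<exists>x\<in>carrier G. lo \<one> x \<and> lo x m \<and> x \<notin> NN"
proof (rule ccontr)
  assume "\<not> ?thesis"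
  then have mN: "\<And>x. lo \<one> x \<Longrightarrow> lo x m \<Longrightarrow> x \<in> NN" using dom by blast
  define good where "good c \<longleftrightarrow> c \<in> carrier G \<and> lo \<one> c \<and> (\<forall>y. lo (inv c) y \<and> lo y c \<longrightarrow> y \<in> NN)" for c
  have good_lo: "lo (inv c) \<one>" if "good c" for c
  proof -
    have c: "c \<in> carrier G" "lo \<one> c" using that good_def by auto
    have "lo (inv c \<otimes> \<one>) (inv c \<otimes> c)" by (rule linv[OF c(2)]) (use c in simp)
    then show ?thesis using c by simp
  qed
  have goodN: "c \<in> NN" if "good c" for c
  proof -
    have c: "c \<in> carrier G" "lo \<one> c" using that good_def by auto
    have "lo (inv c) c" using trns[OF good_lo[OF that] c(2)] .
    then show ?thesis using that c rfl unfolding good_def by blast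
  qed
  have good_max: "\<exists>c. good c \<and> lo (inv c) (inv c1) \<and> lo c1 c \<and> lo (inv c) (inv c2) \<and> lo c2 c"
    if g1: "good c1" and g2: "good c2" for c1 c2
  proof -
    have c: "c1 \<in> carrier G" "c2 \<in> carrier G" using g1 g2 good_def by auto
    show ?thesis
    proof (cases "lo c1 c2")
      case True
      then show ?thesis using g2 inv_anti[OF goodN[OF g1] True] rfl c by (intro exI[of _ c2]) auto
    next
      case False
      then have "lo c2 c1" using tot c by blast
      then show ?thesis using g1 inv_anti[OF goodN[OF g2]] rfl c by (intro exI[of _ c1]) auto
    qed
  qed
  have good_sq: "good (c \<otimes> c)" if g: "good c" for c
  proof -
    have c: "c \<in> carrier G" "lo \<one> c" using g good_def by auto
    have cN: "c \<in> NN" using goodN[OF g] .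
    have ic: "inv (c \<otimes> c) = inv c \<otimes> inv c" using c by (simp add: inv_mult_group)
    have cc: "lo \<one> (c \<otimes> c)"
    proof -
      have "lo (c \<otimes> \<one>) (c \<otimes> c)" by (rule linv[OF c(2)]) (use c in simp)
      then show ?thesis using trns[OF c(2)] c by simp
    qed
    have "y \<in> NN" if y1: "lo (inv c \<otimes> inv c) y" and y2: "lo y (c \<otimes> c)" for y
    proof -
      have yc: "y \<in> carrier G" using dom y1 by auto
      show ?thesis
      proof (cases "lo y c")
        case True
        show ?thesis
        proof (cases "lo (inv c) y")
          case True
          then show ?thesis using g \<open>lo y c\<close> unfolding good_def by blast
        next
          case False
          then have yl: "lo y (inv c)" using tot yc c by blast
          have a1: "lo (c \<otimes> y) (c \<otimes> inv c)" by (rule linv[OF yl]) (use c in simp)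
          have a2: "lo (c \<otimes> (inv c \<otimes> inv c)) (c \<otimes> y)" by (rule linv[OF y1]) (use c in simp)
          have b1: "lo (c \<otimes> y) c" using trns[OF _ c(2)] a1 c by simp
          have b2: "lo (inv c) (c \<otimes> y)" using a2 c by (simp add: m_assoc[symmetric])
          have "c \<otimes> y \<in> NN" using g b1 b2 unfolding good_def by blast
          then have "inv c \<otimes> (c \<otimes> y) \<in> NN" using NN_mult NN_inv cN by blast
          then show ?thesis using c yc by simp
        qed
      next
        case False
        then have yl: "lo c y" using tot yc c by blast
        have a1: "lo (inv c \<otimes> c) (inv c \<otimes> y)" by (rule linv[OF yl]) (use c in simp)
        have a2: "lo (inv c \<otimes> y) (inv c \<otimes> (c \<otimes> c))" by (rule linv[OF y2]) (use c in simp)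
        have b1: "lo (inv c) (inv c \<otimes> y)" using trns[OF good_lo[OF g]] a1 c by simp
        have b2: "lo (inv c \<otimes> y) c" using a2 c by (simp add: m_assoc[symmetric])
        have "inv c \<otimes> y \<in> NN" using g b1 b2 unfolding good_def by blast
        then have "c \<otimes> (inv c \<otimes> y) \<in> NN" using NN_mult cN by blast
        then show ?thesis using c yc by simp
      qed
    qed
    then show ?thesis unfolding good_def using c cc ic by auto
  qed
  define K where "K = {g. \<exists>c. good c \<and> lo (inv c) g \<and> lo g c}"
  have KN: "g \<in> NN" if "g \<in> K" for g using that unfolding K_def good_def by blast
  have Kc: "K \<subseteq> carrier G" using KN NN_carrier by blast
  have Kbound: "\<exists>c. good c \<and> lo (inv c) g \<and> lo g c \<and> lo (inv c) h \<and> lo h c"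
    if gK: "g \<in> K" and hK: "h \<in> K" for g h
  proof -
    obtain c1 c2 where c1: "good c1" "lo (inv c1) g" "lo g c1" and c2: "good c2" "lo (inv c2) h" "lo h c2"
      using gK hK unfolding K_def by blast
    obtain c where c: "good c" "lo (inv c) (inv c1)" "lo c1 c" "lo (inv c) (inv c2)" "lo c2 c"
      using good_max[OF c1(1) c2(1)] by blast
    have "lo (inv c) g" "lo g c" "lo (inv c) h" "lo h c"
      using trns[OF c(2) c1(2)] trns[OF c1(3) c(3)] trns[OF c(4) c2(2)] trns[OF c2(3) c(5)] by auto
    then show ?thesis using c(1) by blast
  qed
  have good1: "good \<one>"
    unfolding good_def using asym NN_one rfl by auto
  have sg: "subgroup K G"
  proof (rule subgroupI)
    show "K \<subseteq> carrier G" by (rule Kc)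
    have "lo (inv \<one>) \<one>" "lo \<one> \<one>" using rfl by auto
    then have "\<one> \<in> K" using good1 unfolding K_def by blast
    then show "K \<noteq> {}" by blast
  next
    fix g assume gK: "g \<in> K"
    then obtain c where c: "good c" "lo (inv c) g" "lo g c" unfolding K_def by blast
    have cc: "c \<in> carrier G" using c good_def by auto
    have "lo (inv c) (inv g)" using inv_anti[OF KN[OF gK] c(3)] .
    moreover have "lo (inv g) c"
      using inv_anti[OF NN_inv[OF goodN[OF c(1)]] c(2)] cc by simp
    ultimately show "inv g \<in> K" using c unfolding K_def by blast
  next
    fix g h assume gK: "g \<in> K" and hK: "h \<in> K"
    obtain c where c: "good c" "lo (inv c) g" "lo g c" "lo (inv c) h" "lo h c"
      using Kbound[OF gK hK] by blast
    have cc: "c \<in> carrier G" using c good_def by auto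
    have gc: "g \<in> carrier G" "h \<in> carrier G" using gK hK Kc by auto
    have hN: "h \<in> NN" using KN hK by blast
    have u1: "lo (g \<otimes> h) (c \<otimes> h)" using NN_right[OF hN] c(3) gc cc by simp
    have u2: "lo (c \<otimes> h) (c \<otimes> c)" by (rule linv[OF c(5)]) (use cc in simp)
    have l1: "lo (inv c \<otimes> inv c) (inv c \<otimes> h)" by (rule linv[OF c(4)]) (use cc in simp)
    have l2: "lo (inv c \<otimes> h) (g \<otimes> h)" using NN_right[OF hN] c(2) gc cc by simp
    have "lo (inv (c \<otimes> c)) (g \<otimes> h)" using trns[OF l1 l2] cc by (simp add: inv_mult_group)
    moreover have "lo (g \<otimes> h) (c \<otimes> c)" using trns[OF u1 u2] .
    ultimately show "g \<otimes> h \<in> K" using good_sq[OF c(1)] unfolding K_def by blast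
  qed
  have cv: "convex_subgroup G lo K"
    unfolding convex_subgroup_def
  proof (intro conjI sg ballI impI)
    fix f1 f2 h assume f1: "f1 \<in> K" and f2: "f2 \<in> K" and "h \<in> carrier G"
      and st: "strict lo f1 h \<and> strict lo h f2"
    obtain c where c: "good c" "lo (inv c) f1" "lo f1 c" "lo (inv c) f2" "lo f2 c"
      using Kbound[OF f1 f2] by blast
    have s1: "lo f1 h" "lo h f2" using st unfolding strict_def by auto
    have "lo (inv c) h" "lo h c" using trns[OF c(2) s1(1)] trns[OF s1(2) c(5)] by auto
    then show "h \<in> K" using c unfolding K_def by blast
  qed
  have cr: "conradian_on G lo K"
    unfolding conradian_on_def
  proof (intro ballI impI)
    fix f g assume fK: "f \<in> K" and gK: "g \<in> K" and st: "strict lo \<one> f \<and> strict lo \<one> g"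
    have fc: "f \<in> carrier G" "g \<in> carrier G" using fK gK Kc by auto
    have "lo (\<one> \<otimes> g) (f \<otimes> g)" using NN_right[OF KN[OF gK], of "\<one>" f] st fc unfolding strict_def by simp
    moreover have "f \<otimes> g \<noteq> g" using st fc unfolding strict_def by auto
    ultimately have "strict lo g (f \<otimes> g [^] Suc 0)" unfolding strict_def using fc by auto
    then show "\<exists>n::nat. strict lo g (f \<otimes> g [^] n)" by blast
  qed
  have goodm: "good m"
    unfolding good_def
  proof (intro conjI allI impI)
    show "m \<in> carrier G" "lo \<one> m" using m by auto
    fix y assume y: "lo (inv m) y \<and> lo y m"
    have yc: "y \<in> carrier G" using y dom by blast
    show "y \<in> NN"
    proof (cases "lo \<one> y")
      case True then show ?thesis using mN y by blast
    next
      case False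
      then have yl: "lo y \<one>" using tot yc by blast
      have a1: "lo (m \<otimes> inv m) (m \<otimes> y)" by (rule linv) (use y m in auto)
      have a2: "lo (m \<otimes> y) (m \<otimes> \<one>)" by (rule linv[OF yl]) (use m in simp)
      have "m \<otimes> y \<in> NN" using mN a1 a2 m by simp
      moreover have "m \<in> NN" using mN m rfl by blast
      ultimately have "inv m \<otimes> (m \<otimes> y) \<in> NN" using NN_mult NN_inv by blast
      then show ?thesis using m yc by simp
    qed
  qed
  have "lo (inv m) m" using trns[OF good_lo[OF goodm] m(2)] .
  moreover have "lo m m" using rfl m by blast
  ultimately have "m \<in> K" unfolding K_def using goodm by blast
  then show False using soul[OF cv cr] m by blast
qed

lemma pos_exists:
  assumes "carrier G \<noteq> {\<one>}" shows "\<exists>m\<in>carrier G. lo \<one> m \<and> m \<noteq> \<one>"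
proof -
  obtain a where a: "a \<in> carrier G" "a \<noteq> \<one>" using assms one_closed by blast
  show ?thesis
  proof (cases "lo \<one> a")
    case True then show ?thesis using a by blast
  next
    case False
    then have "lo a \<one>" using tot a by blast
    then have "lo (inv a \<otimes> a) (inv a \<otimes> \<one>)" by (rule linv) (use a in simp)
    then have "lo \<one> (inv a)" using a by simp
    moreover have "inv a \<noteq> \<one>" using a by (metis inv_inv inv_one)
    ultimately show ?thesis using a by auto
  qed
qed

lemma below:
  assumes "finite T" "T \<subseteq> {t\<in>carrier G. lo \<one> t \<and> t \<noteq> \<one>}"
    and m0: "m0 \<in> carrier G" "lo \<one> m0" "m0 \<noteq> \<one>"
  shows "\<exists>m\<in>carrier G. lo \<one> m \<and> m \<noteq> \<one> \<and> (\<forall>t\<in>T. lo m t)"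
  using assms(1,2)
proof (induction T rule: finite_induct)
  case empty then show ?case using m0 by blast
next
  case (insert t T)
  then obtain m where m: "m \<in> carrier G" "lo \<one> m" "m \<noteq> \<one>" "\<forall>t\<in>T. lo m t" by auto
  have t: "t \<in> carrier G" "lo \<one> t" "t \<noteq> \<one>" using insert by auto
  show ?case
  proof (cases "lo m t")
    case True then show ?thesis using m by auto
  next
    case False
    then have tm: "lo t m" using tot m t by blast
    have "lo t t'" if "t' \<in> insert t T" for t'
    proof (cases "t' = t")
      case True then show ?thesis using rfl t by simp
    next
      case False then have "lo m t'" using m(4) that by simp
      then show ?thesis using trns[OF tm] by blast
    qed
    then have "\<forall>t'\<in>insert t T. lo t t'" by blast
    then show ?thesis using t by blast
  qed
qed

lemma main:
  assumes soul: "is_conradian_soul G lo {\<one>}" and nt: "carrier G \<noteq> {\<one>}"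
  shows "accumulation_point G lo {conj_ord G lo h | h. h \<in> carrier G}"
  unfolding accumulation_point_def
proof (intro allI impI)
  fix F assume F: "finite F \<and> F \<subseteq> carrier G"
  define T where "T = {inv a \<otimes> b | a b. a \<in> F \<and> b \<in> F \<and> lo \<one> (inv a \<otimes> b) \<and> inv a \<otimes> b \<noteq> \<one>}"
  have "T \<subseteq> (\<lambda>(a,b). inv a \<otimes> b) ` (F \<times> F)" unfolding T_def by auto
  then have fT: "finite T" using F finite_subset by blast
  have Tsub: "T \<subseteq> {t\<in>carrier G. lo \<one> t \<and> t \<noteq> \<one>}" unfolding T_def using F by auto
  obtain m0 where m0: "m0 \<in> carrier G" "lo \<one> m0" "m0 \<noteq> \<one>" using pos_exists[OF nt] by blast
  obtain m where m: "m \<in> carrier G" "lo \<one> m" "m \<noteq> \<one>" "\<forall>t\<in>T. lo m t"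
    using below[OF fT Tsub m0] by blast
  have soul': "\<And>H. convex_subgroup G lo H \<Longrightarrow> conradian_on G lo H \<Longrightarrow> H \<subseteq> {\<one>}"
    using soul unfolding is_conradian_soul_def by blast
  obtain x where x: "x \<in> carrier G" "lo \<one> x" "lo x m" "x \<notin> NN"
    using key[OF soul' m(1-3)] by blast
  have ceq: "conj_ord G lo (inv x) a b \<longleftrightarrow> lo x ((inv a \<otimes> b) \<otimes> x)"
    if ab: "a \<in> carrier G" "b \<in> carrier G" for a b
  proof -
    have "lo x ((inv a \<otimes> b) \<otimes> x) \<longleftrightarrow> lo \<one> (inv x \<otimes> ((inv a \<otimes> b) \<otimes> x))"
      using lo_one[of x "(inv a \<otimes> b) \<otimes> x"] x ab by simp
    then show ?thesis unfolding conj_ord_def using ab x by (simp add: m_assoc)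
  qed
  have neq: "conj_ord G lo (inv x) \<noteq> lo"
  proof
    assume e: "conj_ord G lo (inv x) = lo"
    have "x \<in> NN"
    proof (rule NN_I[OF x(1)])
      fix g assume g: "g \<in> carrier G"
      have "lo \<one> g \<longleftrightarrow> conj_ord G lo (inv x) \<one> g" using e by simp
      also have "\<dots> \<longleftrightarrow> lo x (g \<otimes> x)" using ceq[of \<one> g] g by simp
      also have "\<dots> \<longleftrightarrow> lo \<one> (inv x \<otimes> (g \<otimes> x))" using lo_one[of x "g \<otimes> x"] x g by simp
      finally show "lo \<one> (inv x \<otimes> g \<otimes> x) \<longleftrightarrow> lo \<one> g" using x g by (simp add: m_assoc)
    qed
    then show False using x by blast
  qed
  have pos: "lo x (s \<otimes> x) \<and> s \<otimes> x \<noteq> x" if sT: "s \<in> T" for s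
  proof -
    have s: "s \<in> carrier G" "lo m s" "s \<noteq> \<one>" using sT Tsub m by auto
    have "lo (s \<otimes> \<one>) (s \<otimes> x)" by (rule linv[OF x(2)]) (use s in simp)
    then have "lo s (s \<otimes> x)" using s by simp
    then have "lo x (s \<otimes> x)" using trns[OF trns[OF x(3) s(2)]] by blast
    moreover have "s \<otimes> x \<noteq> x" using s x by simp
    ultimately show ?thesis by blast
  qed
  have agree: "agree_on F lo (conj_ord G lo (inv x))"
    unfolding agree_on_def
  proof (intro ballI)
    fix a b assume a: "a \<in> F" and b: "b \<in> F"
    have ac: "a \<in> carrier G" "b \<in> carrier G" using a b F by auto
    define s where "s = inv a \<otimes> b"
    have sc: "s \<in> carrier G" using ac s_def by simp
    have L: "lo a b \<longleftrightarrow> lo \<one> s" using lo_one[of a b] ac s_def by simp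
    have R: "conj_ord G lo (inv x) a b \<longleftrightarrow> lo x (s \<otimes> x)" using ceq ac s_def by simp
    show "lo a b \<longleftrightarrow> conj_ord G lo (inv x) a b"
    proof (cases "s = \<one>")
      case True then show ?thesis using L R rfl x by simp
    next
      case ns: False
      show ?thesis
      proof (cases "lo \<one> s")
        case True
        then have "s \<in> T" unfolding T_def using a b ns s_def by blast
        then show ?thesis using pos L R True by blast
      next
        case False
        then have sl: "lo s \<one>" using tot sc by blast
        have "lo (inv s \<otimes> s) (inv s \<otimes> \<one>)" by (rule linv[OF sl]) (use sc in simp)
        then have is1: "lo \<one> (inv s)" using sc by simp
        have is2: "inv s \<noteq> \<one>" using ns sc by (metis inv_inv inv_one)
        have ise: "inv s = inv b \<otimes> a" using ac s_def by (simp add: inv_mult_group)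
        have "inv s \<in> T" unfolding T_def
          by (rule CollectI, rule exI[of _ b], rule exI[of _ a]) (use a b is1 is2 ise in simp)
        then have p: "lo x (inv s \<otimes> x)" "inv s \<otimes> x \<noteq> x" using pos by auto
        have "\<not> lo x (s \<otimes> x)"
        proof
          assume h: "lo x (s \<otimes> x)"
          have "lo (inv s \<otimes> x) (inv s \<otimes> (s \<otimes> x))" by (rule linv[OF h]) (use sc in simp)
          then have "lo (inv s \<otimes> x) x" using sc x by simp
          then show False using asym p by blast
        qed
        then show ?thesis using L R False by blast
      qed
    qed
  qed
  show "\<exists>lo'\<in>{conj_ord G lo h | h. h \<in> carrier G}. lo' \<noteq> lo \<and> agree_on F lo lo'"
    using neq agree x by auto
qed

end

theorem mainTheorem8:
  assumes "group G"
    and "carrier G \<noteq> {\<one>\<^bsub>G\<^esub>}"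
    and "left_ordering G lo"
    and "is_conradian_soul G lo {\<one>\<^bsub>G\<^esub>}"
  shows "accumulation_point G lo {conj_ord G lo h | h. h \<in> carrier G}"
proof -
  interpret lord G lo using assms(1,3) by (simp add: lord_def lord_axioms_def)
  show ?thesis using main assms(2,4) by blast
qed

end
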